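(* Let $a_{1}<a_{2}<a_{3}<\cdots$ be a strictly increasing infinite sequence of positive integers, let $A=\{a_{1},a_{2},a_{3},\ldots\}$, and let $n>0$ be an integer such that: (1) whenever $m>n$, there exist indices $i<r\leq s<j$ with $a_{m}=a_{i}+a_{j}=a_{r}+a_{s}$; and (2) whenever $a=a_{i}+a_{j}=a_{r}+a_{s}>a_{n}$ for some indices $i<r<s<j$, then $a=a_{m}$ for some $m>n$. Then $A$ is eventually linear, i.e., there exist integers $N$ and $k\geq 1$ such that for all integers $x>N$, $x\in A$ if and only if $k\mid x$. *)

theory Defs
  imports Main
begin

end

theory Submission
  imports Defs
begin

lemma comb4:
  fixes e1 e2 e3 e4 b :: int
  assumes "b > 0" "e1 < e2" "e2 < e3" "e3 < e4"
  shows "(e2 \<noteq> e1+b \<and> e3 \<noteq> e2+b \<and> e3 \<noteq> e1+b) \<or> (e2 \<noteq> e1+b \<and> e4 \<noteq> e2+b \<and> e4 \<noteq> e1+b) \<or>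
    (e3 \<noteq> e1+b \<and> e4 \<noteq> e3+b \<and> e4 \<noteq> e1+b) \<or> (e3 \<noteq> e2+b \<and> e4 \<noteq> e3+b \<and> e4 \<noteq> e2+b) \<or>
    (\<exists>a\<in>{e1,e2,e3,e4}. \<exists>c\<in>{e1,e2,e3,e4}. a + b \<in> {e1,e2,e3,e4} \<and> c + b \<in> {e1,e2,e3,e4} \<and> a < c \<and> c \<noteq> a + b)"
  using assms by auto

locale setting =
  fixes A :: "int set" and T0 :: int
  assumes posA: "\<And>x. x \<in> A \<Longrightarrow> x > 0"
    and T0pos: "T0 > 0"
    and TR: "\<And>u1 u2 u3 u4. u1 \<in> A \<Longrightarrow> u2 \<in> A \<Longrightarrow> u3 \<in> A \<Longrightarrow> u4 \<in> A \<Longrightarrow>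
       u1 < u2 \<Longrightarrow> u2 < u3 \<Longrightarrow> u3 < u4 \<Longrightarrow> u1 + u4 = u2 + u3 \<Longrightarrow> u1 + u4 > T0 \<Longrightarrow> u1 + u4 \<in> A"
    and C1: "\<And>x. x \<in> A \<Longrightarrow> x > T0 \<Longrightarrow> \<exists>u1 u2 u3 u4. u1 \<in> A \<and> u2 \<in> A \<and> u3 \<in> A \<and> u4 \<in> A \<and>
        u1 < u2 \<and> u2 \<le> u3 \<and> u3 < u4 \<and> x = u1 + u4 \<and> x = u2 + u3"
    and infA: "infinite A"
begin

lemma key2:
  assumes "p \<in> A" "q \<in> A" "r \<in> A" "s \<in> A" "p < q" "r < s" "p < r" "p + q = r + s" "p + q > T0"
  shows "p + q \<in> A"
proof -
  have "s < q" using assms by linarith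
  have "r + s = p + q" using assms by simp
  from TR[of p r s q] assms \<open>s<q\<close> show ?thesis by linarith
qed

lemma two_reps:
  assumes "a \<in> A" "b \<in> A" "c \<in> A" "d \<in> A" "a + b = c + d"
    "a \<noteq> b" "a \<noteq> c" "a \<noteq> d" "b \<noteq> c" "b \<noteq> d" "c \<noteq> d" "a + b > T0"
  shows "a + b \<in> A"
proof -
  have A1: "min a b \<in> A" "max a b \<in> A" "min c d \<in> A" "max c d \<in> A"
    using assms by (auto simp: min_def max_def)
  have s1: "min a b + max a b = a + b" "min c d + max c d = c + d" by (auto simp: min_def max_def)
  have lt: "min a b < max a b" "min c d < max c d" using assms by (auto simp: min_def max_def)
  have ne: "min a b \<noteq> min c d" using assms by (auto simp: min_def max_def)
  show ?thesis
  proof (cases "min a b < min c d")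
    case True
    from key2[OF A1 lt True] s1 assms show ?thesis by simp
  next
    case False
    then have "min c d < min a b" using ne by linarith
    from key2[OF A1(3,4,1,2) lt(2,1) this] s1 assms show ?thesis by simp
  qed
qed

lemma three_pairs:
  assumes d: "d > 0" and o: "s1 < s2" "s2 < s3"
    and inA: "s1 \<in> A" "s2 \<in> A" "s3 \<in> A" "s1 + d \<in> A" "s2 + d \<in> A" "s3 + d \<in> A"
    and big: "s1 + d > T0" "s2 + d > T0"
    and dj: "s2 \<noteq> s1 + d" "s3 \<noteq> s2 + d" "s3 \<noteq> s1 + d"
  shows "\<exists>v>0. \<exists>y. \<forall>j::nat. y + int j * v \<in> A"
proof -
  define v where "v = s1 + s3 + d"
  have p1: "s1 > 0" using posA inA by auto
  have vA: "v \<in> A" unfolding v_def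
    using two_reps[of s3 "s1 + d" "s3 + d" s1] inA o d dj big p1 by (auto simp: algebra_simps)
  have v0: "v > 0" unfolding v_def using p1 d o by linarith
  have step: "y \<in> A \<and> y + d \<in> A \<Longrightarrow> (y = s2 \<or> y \<ge> s2 + v) \<Longrightarrow> y + v \<in> A \<and> y + v + d \<in> A" for y
  proof -
    assume h: "y \<in> A \<and> y + d \<in> A" and c: "y = s2 \<or> y \<ge> s2 + v"
    have e: "s3 + (y + d) \<in> A"
      using two_reps[of s3 "y + d" "s3 + d" y] h inA o d dj big c p1 unfolding v_def
      by (auto simp: algebra_simps)
    have 1: "y + v \<in> A"
      using two_reps[of y v s1 "s3 + (y + d)"] h vA e inA o d dj big c p1 unfolding v_def
      by (auto simp: algebra_simps)
    have 2: "y + d + v \<in> A"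
      using two_reps[of "y + d" v "s1 + d" "s3 + (y + d)"] h vA e inA o d dj big c p1 unfolding v_def
      by (auto simp: algebra_simps)
    show ?thesis using 1 2 by (simp add: algebra_simps)
  qed
  have "s2 + int j * v \<in> A \<and> s2 + int j * v + d \<in> A" for j :: nat
  proof (induction j)
    case 0 then show ?case using inA by simp
  next
    case (Suc j)
    have c: "s2 + int j * v = s2 \<or> s2 + int j * v \<ge> s2 + v"
    proof (cases j)
      case 0 then show ?thesis by simp
    next
      case (Suc k) then show ?thesis using v0 by (simp add: algebra_simps)
    qed
    from step[OF Suc.IH c] show ?case by (simp add: algebra_simps)
  qed
  then show ?thesis using v0 by blast
qed

lemma two_mid:
  assumes b: "b > 0" and xy: "x < y"
    and inA: "x - b \<in> A" "x \<in> A" "x + b \<in> A" "y - b \<in> A" "y \<in> A" "y + b \<in> A"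
    and big: "x > T0" and ne: "y \<noteq> x + b"
  shows "\<exists>v>0. \<exists>y0. \<forall>j::nat. y0 + int j * v \<in> A"
proof -
  have yb: "y - b > 0" using posA[OF inA(4)] by simp
  have xb: "x - b > 0" using posA[OF inA(1)] by simp
  have step: "z - b \<in> A \<and> z \<in> A \<and> z + b \<in> A \<Longrightarrow> (z = y \<or> z \<ge> y + x) \<Longrightarrow>
      (x + z) - b \<in> A \<and> x + z \<in> A \<and> (x + z) + b \<in> A" for z
  proof -
    assume h: "z - b \<in> A \<and> z \<in> A \<and> z + b \<in> A" and c: "z = y \<or> z \<ge> y + x"
    have 1: "(x - b) + (z + b) \<in> A"
      using two_reps[of "x - b" "z + b" x z] h inA b xy big c ne yb xb by (auto simp: algebra_simps)
    have 2: "(x - b) + z \<in> A"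
      using two_reps[of "x - b" z x "z - b"] h inA b xy big c ne yb xb by (auto simp: algebra_simps)
    have 3: "(x + b) + z \<in> A"
      using two_reps[of "x + b" z x "z + b"] h inA b xy big c ne yb xb by (auto simp: algebra_simps)
    show ?thesis using 1 2 3 by (simp add: algebra_simps)
  qed
  have "(y + int j * x) - b \<in> A \<and> y + int j * x \<in> A \<and> (y + int j * x) + b \<in> A" for j :: nat
  proof (induction j)
    case 0 then show ?case using inA by simp
  next
    case (Suc j)
    have c: "y + int j * x = y \<or> y + int j * x \<ge> y + x"
    proof (cases j)
      case 0 then show ?thesis by simp
    next
      case (Suc k) then show ?thesis using big T0pos by (simp add: algebra_simps)
    qed
    from step[OF Suc.IH c] show ?case by (simp add: algebra_simps)
  qed
  then show ?thesis using big T0pos by (metis less_trans)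
qed

lemma four_partners:
  assumes b: "b > 0" and o: "e1 < e2" "e2 < e3" "e3 < e4"
    and S: "\<And>e. e \<in> {e1,e2,e3,e4} \<Longrightarrow> e \<in> A \<and> e + b \<in> A \<and> e + b > T0"
  shows "\<exists>v>0. \<exists>y. \<forall>j::nat. y + int j * v \<in> A"
proof -
  have tri: "s1 \<in> {e1,e2,e3,e4} \<Longrightarrow> s2 \<in> {e1,e2,e3,e4} \<Longrightarrow> s3 \<in> {e1,e2,e3,e4} \<Longrightarrow>
     s1 < s2 \<Longrightarrow> s2 < s3 \<Longrightarrow> s2 \<noteq> s1 + b \<Longrightarrow> s3 \<noteq> s2 + b \<Longrightarrow> s3 \<noteq> s1 + b \<Longrightarrow> ?thesis" for s1 s2 s3
    using three_pairs[of b s1 s2 s3] S[of s1] S[of s2] S[of s3] b by blast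
  have two: "a \<in> {e1,e2,e3,e4} \<Longrightarrow> c \<in> {e1,e2,e3,e4} \<Longrightarrow> a + b \<in> {e1,e2,e3,e4} \<Longrightarrow>
     c + b \<in> {e1,e2,e3,e4} \<Longrightarrow> a < c \<Longrightarrow> c \<noteq> a + b \<Longrightarrow> ?thesis" for a c
  proof -
    assume h: "a \<in> {e1,e2,e3,e4}" "c \<in> {e1,e2,e3,e4}" "a + b \<in> {e1,e2,e3,e4}"
      "c + b \<in> {e1,e2,e3,e4}" "a < c" "c \<noteq> a + b"
    show ?thesis
      using two_mid[of b "a + b" "c + b"] S[OF h(1)] S[OF h(2)] S[OF h(3)] S[OF h(4)] h b
      by (simp add: algebra_simps)
  qed
  from comb4[OF b o] show ?thesis
  proof (elim disjE)
    assume "e2 \<noteq> e1+b \<and> e3 \<noteq> e2+b \<and> e3 \<noteq> e1+b" then show ?thesis using tri[of e1 e2 e3] o by simp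
  next
    assume "e2 \<noteq> e1+b \<and> e4 \<noteq> e2+b \<and> e4 \<noteq> e1+b" then show ?thesis using tri[of e1 e2 e4] o by simp
  next
    assume "e3 \<noteq> e1+b \<and> e4 \<noteq> e3+b \<and> e4 \<noteq> e1+b" then show ?thesis using tri[of e1 e3 e4] o by simp
  next
    assume "e3 \<noteq> e2+b \<and> e4 \<noteq> e3+b \<and> e4 \<noteq> e2+b" then show ?thesis using tri[of e2 e3 e4] o by simp
  next
    assume "\<exists>a\<in>{e1,e2,e3,e4}. \<exists>c\<in>{e1,e2,e3,e4}. a + b \<in> {e1,e2,e3,e4} \<and> c + b \<in> {e1,e2,e3,e4} \<and> a < c \<and> c \<noteq> a + b"
    then obtain a c where "a\<in>{e1,e2,e3,e4}" "c\<in>{e1,e2,e3,e4}" "a + b \<in> {e1,e2,e3,e4}" "c + b \<in> {e1,e2,e3,e4}" "a < c" "c \<noteq> a + b"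
      by blast
    then show ?thesis by (rule two)
  qed
qed

definition gen :: "int \<Rightarrow> bool" where
  "gen x \<longleftrightarrow> (\<exists>u1 u2 u3 u4. u1 \<in> A \<and> u2 \<in> A \<and> u3 \<in> A \<and> u4 \<in> A \<and>
      u1 < u2 \<and> u2 < u3 \<and> u3 < u4 \<and> x = u1 + u4 \<and> x = u2 + u3)"

lemma card_bound:
  assumes Sb: "\<And>b. b \<in> A \<Longrightarrow> finite {a \<in> A. a + b \<in> A \<and> a + b > T0} \<and> card {a \<in> A. a + b \<in> A \<and> a + b > T0} \<le> 3"
    and X: "X \<ge> T0"
  shows "card {x \<in> A. T0 < x \<and> x \<le> X \<and> gen x} \<le> 3 * card {x \<in> A. x \<le> T0}"
proof -
  define AX where "AX = {x \<in> A. x \<le> X}"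
  define TX where "TX = {x \<in> A. T0 < x \<and> x \<le> X}"
  define L where "L = {x \<in> A. x \<le> T0}"
  define S where "S b = {a \<in> A. a + b \<in> A \<and> a + b > T0}" for b
  define fib where "fib x = {(w,u). w \<in> A \<and> u \<in> A \<and> u + w = x}" for x
  define P where "P = (\<Union>x\<in>TX. fib x)"
  have finAX: "finite AX"
    by (rule finite_subset[of _ "{1..X}"]) (auto simp: AX_def dest: posA)
  have finTX: "finite TX" by (rule finite_subset[OF _ finAX]) (auto simp: AX_def TX_def)
  have finL: "finite L" by (rule finite_subset[OF _ finAX]) (use X in \<open>auto simp: AX_def L_def\<close>)
  have cardAX: "card AX = card TX + card L"
  proof -
    have "AX = TX \<union> L" using X by (auto simp: AX_def TX_def L_def)
    moreover have "TX \<inter> L = {}" by (auto simp: TX_def L_def)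
    ultimately show ?thesis using finTX finL by (simp add: card_Un_disjoint)
  qed
  have fibsub: "fib x \<subseteq> AX \<times> AX" if "x \<in> TX" for x
  proof
    fix p assume "p \<in> fib x"
    then obtain w u where p: "p = (w,u)" "w \<in> A" "u \<in> A" "u + w = x" by (auto simp: fib_def)
    have "w > 0" "u > 0" using posA p by auto
    then show "p \<in> AX \<times> AX" using p that by (auto simp: AX_def TX_def)
  qed
  have finfib: "finite (fib x)" if "x \<in> TX" for x
    using finite_subset[OF fibsub[OF that]] finAX by blast
  have cardP: "card P = (\<Sum>x\<in>TX. card (fib x))"
    unfolding P_def
    by (rule card_UN_disjoint[OF finTX]) (use finfib in \<open>auto simp: fib_def\<close>)
  have fib3: "(if gen x then 4 else 3) \<le> card (fib x)" if "x \<in> TX" for x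
  proof (cases "gen x")
    case True
    then obtain u1 u2 u3 u4 where u: "u1 \<in> A" "u2 \<in> A" "u3 \<in> A" "u4 \<in> A"
      "u1 < u2" "u2 < u3" "u3 < u4" "x = u1 + u4" "x = u2 + u3" by (auto simp: gen_def)
    have sub: "{(u4,u1),(u1,u4),(u3,u2),(u2,u3)} \<subseteq> fib x" using u by (auto simp: fib_def)
    have "card {(u4,u1),(u1,u4),(u3,u2),(u2,u3)} = 4" using u by auto
    then show ?thesis using card_mono[OF finfib[OF that] sub] True by simp
  next
    case False
    have "x \<in> A" "x > T0" using that by (auto simp: TX_def)
    from C1[OF this] obtain u1 u2 u3 u4 where u: "u1 \<in> A" "u2 \<in> A" "u3 \<in> A" "u4 \<in> A"
      "u1 < u2" "u2 \<le> u3" "u3 < u4" "x = u1 + u4" "x = u2 + u3" by blast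
    have sub: "{(u4,u1),(u1,u4),(u3,u2)} \<subseteq> fib x" using u by (auto simp: fib_def)
    have "card {(u4,u1),(u1,u4),(u3,u2)} = 3" using u by auto
    then show ?thesis using card_mono[OF finfib[OF that] sub] False by simp
  qed
  have lower: "(\<Sum>x\<in>TX. (if gen x then 4 else 3::nat)) \<le> card P"
    unfolding cardP by (rule sum_mono) (rule fib3)
  have sumif: "(\<Sum>x\<in>TX. (if gen x then 4 else 3::nat)) = 3 * card TX + card {x \<in> TX. gen x}"
  proof -
    have "(\<Sum>x\<in>TX. (if gen x then 4 else 3::nat)) = (\<Sum>x\<in>TX. 3 + (if gen x then 1 else 0))"
      by (rule sum.cong) auto
    also have "\<dots> = 3 * card TX + (\<Sum>x\<in>TX. (if gen x then 1 else 0))"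
      by (simp add: sum.distrib)
    also have "(\<Sum>x\<in>TX. (if gen x then 1 else 0::nat)) = card {x \<in> TX. gen x}"
      using sum.inter_filter[OF finTX, of "\<lambda>_. 1::nat" gen] by simp
    finally show ?thesis .
  qed
  have Psub: "P \<subseteq> Sigma AX S"
  proof
    fix p assume "p \<in> P"
    then obtain x w u where p: "x \<in> TX" "p = (w,u)" "w \<in> A" "u \<in> A" "u + w = x"
      by (auto simp: P_def fib_def)
    have "u > 0" using posA p by auto
    then show "p \<in> Sigma AX S" using p by (auto simp: AX_def TX_def S_def)
  qed
  have finS: "\<And>w. w \<in> AX \<Longrightarrow> finite (S w)" using Sb by (auto simp: AX_def S_def)
  have "card P \<le> card (Sigma AX S)"
    by (rule card_mono[OF _ Psub]) (use finAX finS in \<open>auto intro: finite_SigmaI\<close>)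
  also have "\<dots> = (\<Sum>w\<in>AX. card (S w))" by (rule card_SigmaI[OF finAX]) (use finS in blast)
  also have "\<dots> \<le> (\<Sum>w\<in>AX. 3)" by (rule sum_mono) (use Sb in \<open>auto simp: AX_def S_def\<close>)
  also have "\<dots> = 3 * card AX" by simp
  finally have upper: "card P \<le> 3 * card AX" .
  have "3 * card TX + card {x \<in> TX. gen x} \<le> 3 * (card TX + card L)"
  proof -
    have "3 * card TX + card {x \<in> TX. gen x} \<le> card P" using lower sumif by simp
    from order.trans[OF this upper] show ?thesis by (simp only: cardAX)
  qed
  then have "card {x \<in> TX. gen x} \<le> 3 * card L" by simp
  moreover have "{x \<in> TX. gen x} = {x \<in> A. T0 < x \<and> x \<le> X \<and> gen x}" by (auto simp: TX_def)
  ultimately show ?thesis by (simp add: L_def)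
qed

lemma finite_gen:
  assumes Sb: "\<And>b. b \<in> A \<Longrightarrow> finite {a \<in> A. a + b \<in> A \<and> a + b > T0} \<and> card {a \<in> A. a + b \<in> A \<and> a + b > T0} \<le> 3"
  shows "finite {x \<in> A. T0 < x \<and> gen x}"
proof (rule ccontr)
  define c where "c = 3 * card {x \<in> A. x \<le> T0}"
  assume "infinite {x \<in> A. T0 < x \<and> gen x}"
  from infinite_arbitrarily_large[OF this, of "Suc c"]
  obtain F where F: "finite F" "card F = Suc c" "F \<subseteq> {x \<in> A. T0 < x \<and> gen x}" by blast
  have "F \<noteq> {}" using F by auto
  define X where "X = Max F"
  have XF: "X \<in> F" using F \<open>F \<noteq> {}\<close> by (simp add: X_def)
  have X0: "X \<ge> T0" using F XF by auto
  have "F \<subseteq> {x \<in> A. T0 < x \<and> x \<le> X \<and> gen x}" using F by (auto simp: X_def)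
  moreover have "finite {x \<in> A. T0 < x \<and> x \<le> X \<and> gen x}"
    by (rule finite_subset[of _ "{T0..X}"]) auto
  ultimately have "card F \<le> card {x \<in> A. T0 < x \<and> x \<le> X \<and> gen x}" by (rule card_mono[rotated])
  also have "\<dots> \<le> c" unfolding c_def by (rule card_bound[OF Sb X0])
  finally show False using F by simp
qed

end
context setting begin

lemma gen_infinite: "infinite {x \<in> A. T0 < x \<and> gen x}"
proof
  define Gs where "Gs = {x \<in> A. T0 < x \<and> gen x}"
  assume finG: "finite {x \<in> A. T0 < x \<and> gen x}"
  then have fG: "finite (insert T0 Gs)" by (simp add: Gs_def)
  define M where "M = Max (insert T0 Gs)"
  have MT: "M \<ge> T0" using fG by (simp add: M_def)
  have M0: "M > 0" using MT T0pos by linarith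
  have notgen: "\<not> gen x" if "x \<in> A" "x > M" for x
  proof
    assume "gen x"
    then have "x \<in> Gs" using that MT by (auto simp: Gs_def)
    then have "x \<le> M" using fG by (simp add: M_def)
    then show False using that by simp
  qed
  have noTwo: False if "u1 \<in> A" "u2 \<in> A" "u3 \<in> A" "u4 \<in> A" "u1 < u2" "u2 < u3" "u3 < u4"
      "u1 + u4 = u2 + u3" "u1 + u4 > M" for u1 u2 u3 u4
  proof -
    have zA: "u1 + u4 \<in> A" using TR[OF that(1-8)] that(9) MT by linarith
    have "gen (u1 + u4)" unfolding gen_def
      by (rule exI[of _ u1], rule exI[of _ u2], rule exI[of _ u3], rule exI[of _ u4]) (simp add: that)
    then show False using notgen[OF zA] that(9) by simp
  qed
  have half: "\<exists>p h q. p \<in> A \<and> h \<in> A \<and> q \<in> A \<and> p < h \<and> h < q \<and> x = p + q \<and> x = 2 * h"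
    if "x \<in> A" "x > M" for x
  proof -
    have "x > T0" using that MT by linarith
    from C1[OF that(1) this] obtain u1 u2 u3 u4 where u: "u1 \<in> A" "u2 \<in> A" "u3 \<in> A" "u4 \<in> A"
      "u1 < u2" "u2 \<le> u3" "u3 < u4" "x = u1 + u4" "x = u2 + u3" by blast
    have "u2 = u3"
    proof (rule ccontr)
      assume "u2 \<noteq> u3"
      then have "u2 < u3" using u by simp
      then have "gen x" unfolding gen_def
        by (rule_tac exI[of _ u1], rule_tac exI[of _ u2], rule_tac exI[of _ u3], rule_tac exI[of _ u4]) (use u in auto)
      then show False using notgen that by blast
    qed
    then show ?thesis using u by (intro exI[of _ u1] exI[of _ u2] exI[of _ u4]) auto
  qed
  have near: "\<exists>h \<delta>. x = 2 * h \<and> h \<in> A \<and> h - \<delta> \<in> A \<and> 1 \<le> \<delta> \<and> \<delta> \<le> M"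
    if "x \<in> A" "x > 4 * M" for x
  proof -
    have "x > M" using that M0 by linarith
    from half[OF that(1) this] obtain p h q where phq: "p \<in> A" "h \<in> A" "q \<in> A" "p < h" "h < q"
      "x = p + q" "x = 2 * h" by blast
    have qM: "q > M" using phq that M0 by linarith
    from half[OF phq(3) qM] obtain h' where h': "h' \<in> A" "q = 2 * h'" by blast
    have p0: "p > 0" using posA phq by auto
    have pM: "p \<le> M"
    proof (rule ccontr)
      assume "\<not> p \<le> M"
      then have "p > M" by simp
      from half[OF phq(1) this] obtain h'' where h'': "h'' \<in> A" "p = 2 * h''" by blast
      have a1: "h'' < h'" "h' < h" "h < q" "h'' + q = h' + h" "h'' + q > M"
        using phq h' h'' qM p0 by linarith+
      show False by (rule noTwo[OF h''(1) h'(1) phq(2) phq(3) a1])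
    qed
    have "h - (h - h') \<in> A" using h' by simp
    moreover have "1 \<le> h - h'" "h - h' \<le> M" using phq h' pM p0 by linarith+
    ultimately show ?thesis using phq by blast
  qed
  define Xs where "Xs = {x \<in> A. x > 4 * M}"
  have infXs: "infinite Xs"
  proof
    assume "finite Xs"
    moreover have "finite {x \<in> A. x \<le> 4 * M}"
      by (rule finite_subset[of _ "{1..4*M}"]) (auto dest: posA)
    ultimately have "finite (Xs \<union> {x \<in> A. x \<le> 4 * M})" by simp
    moreover have "Xs \<union> {x \<in> A. x \<le> 4 * M} = A" by (auto simp: Xs_def)
    ultimately show False using infA by simp
  qed
  define Y where "Y \<delta> = {x \<in> Xs. \<exists>h. x = 2 * h \<and> h \<in> A \<and> h - \<delta> \<in> A}" for \<delta>
  have "Xs \<subseteq> (\<Union>\<delta>\<in>{1..M}. Y \<delta>)"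
  proof
    fix x assume "x \<in> Xs"
    then have "x \<in> A" "x > 4 * M" by (auto simp: Xs_def)
    from near[OF this] obtain h \<delta> where "x = 2 * h \<and> h \<in> A \<and> h - \<delta> \<in> A \<and> 1 \<le> \<delta> \<and> \<delta> \<le> M" by blast
    then show "x \<in> (\<Union>\<delta>\<in>{1..M}. Y \<delta>)" using \<open>x \<in> Xs\<close> unfolding Y_def by auto
  qed
  then have "\<not> (\<forall>\<delta>\<in>{1..M}. finite (Y \<delta>))" using infXs finite_subset by blast
  then obtain \<delta> where \<delta>: "\<delta> \<in> {1..M}" "infinite (Y \<delta>)" by blast
  have unb: "\<exists>x\<in>Y \<delta>. x > B" for B
  proof (rule ccontr)
    assume "\<not> (\<exists>x\<in>Y \<delta>. x > B)"
    then have "Y \<delta> \<subseteq> {0..B}" using M0 by (auto simp: Y_def Xs_def not_less)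
    then show False using \<delta> finite_subset by blast
  qed
  obtain x1 where x1: "x1 \<in> Y \<delta>" using unb by blast
  obtain x2 where x2: "x2 \<in> Y \<delta>" "x2 > x1 + 2 * \<delta> + 2" using unb by blast
  obtain h1 where h1: "x1 = 2 * h1" "h1 \<in> A" "h1 - \<delta> \<in> A" "x1 > 4 * M" using x1 by (auto simp: Y_def Xs_def)
  obtain h2 where h2: "x2 = 2 * h2" "h2 \<in> A" "h2 - \<delta> \<in> A" using x2 by (auto simp: Y_def)
  have p1: "h1 - \<delta> > 0" using posA[OF h1(3)] by simp
  have a2: "h1 - \<delta> < h1" "h1 < h2 - \<delta>" "h2 - \<delta> < h2" "(h1 - \<delta>) + h2 = h1 + (h2 - \<delta>)" "(h1 - \<delta>) + h2 > M"
    using h1 h2 x2 \<delta> p1 M0 by auto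
  show False by (rule noTwo[OF h1(3) h1(2) h2(3) h2(2) a2])
qed

end

lemma four_sorted:
  fixes F :: "int set"
  assumes "finite F" "card F = 4"
  shows "\<exists>e1 e2 e3 e4. e1<e2 \<and> e2<e3 \<and> e3<e4 \<and> {e1,e2,e3,e4} \<subseteq> F"
proof -
  define xs where "xs = sorted_list_of_set F"
  have len: "length xs = 4" using assms by (simp add: xs_def)
  have st: "sorted_wrt (<) xs" by (simp add: xs_def strict_sorted_list_of_set)
  have set: "set xs = F" using assms by (simp add: xs_def)
  have "\<exists>a b c d. xs = [a,b,c,d]" using len by (simp add: length_Suc_conv numeral_eq_Suc) blast
  then obtain a b c d where "xs = [a,b,c,d]" by blast
  then show ?thesis using st set by auto
qed

context setting begin
lemma exists_AP: "\<exists>v>0. \<exists>y. \<forall>j::nat. y + int j * v \<in> A"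
proof -
  define S where "S b = {a \<in> A. a + b \<in> A \<and> a + b > T0}" for b
  have "\<not> (\<forall>b. b \<in> A \<longrightarrow> finite (S b) \<and> card (S b) \<le> 3)"
    using finite_gen gen_infinite unfolding S_def by blast
  then obtain b where b: "b \<in> A" "\<not> (finite (S b) \<and> card (S b) \<le> 3)" by blast
  obtain F where F: "F \<subseteq> S b" "finite F" "card F = 4"
  proof (cases "finite (S b)")
    case True
    then have "4 \<le> card (S b)" using b by simp
    from obtain_subset_with_card_n[OF this] that show ?thesis by blast
  next
    case False
    from infinite_arbitrarily_large[OF False, of 4] that show ?thesis by blast
  qed
  from four_sorted[OF F(2,3)] obtain e1 e2 e3 e4 where e: "e1<e2" "e2<e3" "e3<e4" "{e1,e2,e3,e4} \<subseteq> F"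
    by blast
  have b0: "b > 0" using posA b by auto
  show ?thesis
    by (rule four_partners[OF b0 e(1-3)]) (use e F in \<open>auto simp: S_def\<close>)
qed
end

context setting begin

lemma AP_final:
  assumes v: "v > 0" and ap: "\<And>j::nat. y + int j * v \<in> A"
  shows "\<exists>N k. k \<ge> 1 \<and> (\<forall>x. x > N \<longrightarrow> (x \<in> A \<longleftrightarrow> k dvd x))"
proof -
  define full where "full c \<longleftrightarrow> (\<exists>B. \<forall>x. x > B \<longrightarrow> v dvd (x - c) \<longrightarrow> x \<in> A)" for c
  define two where "two c \<longleftrightarrow> (\<exists>y1 y2. y1 \<in> A \<and> y2 \<in> A \<and> y1 < y2 \<and> v dvd (y1 - c) \<and> v dvd (y2 - c))" for c
  have cong: "full c'" if "full c" "v dvd (c - c')" for c c'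
  proof -
    from that(1) obtain B where B: "\<forall>x. x > B \<longrightarrow> v dvd (x - c) \<longrightarrow> x \<in> A" by (auto simp: full_def)
    have "v dvd (x - c)" if "v dvd (x - c')" for x
    proof -
      have "x - c = (x - c') - (c - c')" by simp
      then show ?thesis using that \<open>v dvd (c - c')\<close> by (metis dvd_diff)
    qed
    then show ?thesis using B unfolding full_def by blast
  qed
  have L1: "full (c + c')" if "two c" "full c'" for c c'
  proof -
    from that(1) obtain y1 y2 where y: "y1 \<in> A" "y2 \<in> A" "y1 < y2" "v dvd (y1 - c)" "v dvd (y2 - c)"
      by (auto simp: two_def)
    from that(2) obtain B where B: "\<And>x. x > B \<Longrightarrow> v dvd (x - c') \<Longrightarrow> x \<in> A" by (auto simp: full_def)
    have p1: "y1 > 0" using posA y by auto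
    have p2: "y2 > 0" using posA y by auto
    define B2 where "B2 = \<bar>B\<bar> + 2 * y2 + T0"
    have "x \<in> A" if x: "x > B2" "v dvd (x - (c + c'))" for x
    proof -
      have d2: "v dvd ((x - y2) - c')"
      proof -
        have "(x - y2) - c' = (x - (c + c')) - (y2 - c)" by simp
        then show ?thesis using x(2) y(5) by (metis dvd_diff)
      qed
      have d1: "v dvd ((x - y1) - c')"
      proof -
        have "(x - y1) - c' = (x - (c + c')) - (y1 - c)" by simp
        then show ?thesis using x(2) y(4) by (metis dvd_diff)
      qed
      have z2: "x - y2 \<in> A" by (rule B) (use x d2 B2_def T0pos p2 in \<open>auto\<close>)
      have z1: "x - y1 \<in> A" by (rule B) (use x d1 B2_def T0pos y p1 p2 in \<open>auto\<close>)
      have "y2 + (x - y2) \<in> A"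
        by (rule two_reps[OF y(2) z2 y(1) z1]) (use x y p1 p2 B2_def T0pos in \<open>auto\<close>)
      then show ?thesis by simp
    qed
    then show ?thesis unfolding full_def by blast
  qed
  have L2: "two c" if "full c" for c
  proof -
    from that obtain B where B: "\<And>x. x > B \<Longrightarrow> v dvd (x - c) \<Longrightarrow> x \<in> A" by (auto simp: full_def)
    define t where "t = \<bar>B\<bar> + \<bar>c\<bar> + 1"
    have "c + t * v > B" using v by (simp add: t_def) (smt (verit) mult_le_cancel_left1 mult_sign_intros(1))
    then have "c + t * v \<in> A" "c + (t + 1) * v \<in> A" using v by (auto intro!: B simp: algebra_simps)
    then show ?thesis unfolding two_def using v
      by (intro exI[of _ "c + t * v"] exI[of _ "c + (t + 1) * v"]) (auto simp: algebra_simps)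
  qed
  have fy: "full y"
  proof -
    have "x \<in> A" if xy: "x > y" "v dvd (x - y)" for x
    proof -
      obtain m where m: "x - y = v * m" using xy(2) by (auto simp: dvd_def)
      have "m \<ge> 0" using m xy(1) v by (smt (verit) mult_le_0_iff)
      then have "x = y + int (nat m) * v" using m by (simp add: algebra_simps)
      then show ?thesis using ap[of "nat m"] by simp
    qed
    then show ?thesis unfolding full_def by blast
  qed
  have add: "full (c1 + c2)" if "full c1" "full c2" for c1 c2 using L1[OF L2[OF that(1)] that(2)] .
  have mult: "full (int t * c)" if "full c" "t \<ge> 1" for c t
    using that(2)
  proof (induction t rule: nat_induct_at_least)
    case base then show ?case using that(1) by simp
  next
    case (Suc t)
    have "full (c + int t * c)" using add[OF that(1) Suc.IH] .
    then show ?case by (simp add: algebra_simps)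
  qed
  have f0: "full 0" if "full c" for c
  proof -
    have "full (int (nat v) * c)" using mult[OF that, of "nat v"] v by simp
    then show ?thesis by (rule cong) (use v in simp)
  qed
  have neg: "full (- c)" if "full c" for c
  proof -
    have "full (int (nat (2 * v - 1)) * c)" using mult[OF that, of "nat (2*v - 1)"] v by simp
    then show ?thesis by (rule cong) (use v in \<open>simp add: algebra_simps\<close>)
  qed
  have sub: "full (c1 - c2)" if "full c1" "full c2" for c1 c2
    using add[OF that(1) neg[OF that(2)]] by simp
  have two_full: "full c" if "two c" for c
  proof -
    have fc: "full (c + y)" using L1[OF that fy] .
    show ?thesis using sub[OF fc fy] by simp
  qed
  have fv: "full v" using cong[OF f0[OF fy], of v] by simp
  define k where "k = (LEAST k. k > 0 \<and> full (int k))"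
  have kex: "nat v > 0 \<and> full (int (nat v))" using v fv by simp
  have kprop: "k > 0 \<and> full (int k)" unfolding k_def by (rule LeastI[of _ "nat v"]) (rule kex)
  have kmin: "\<not> (r > 0 \<and> full (int r))" if "r < k" for r
    using not_less_Least[of r "\<lambda>k. k > 0 \<and> full (int k)"] that unfolding k_def by blast
  have fulliff: "full c \<longleftrightarrow> int k dvd c" for c
  proof
    assume fc: "full c"
    define r where "r = c mod int k"
    have r0: "r \<ge> 0" "r < int k" using kprop by (auto simp: r_def)
    have "c = int k * (c div int k) + r" by (simp add: r_def)
    have fr: "full r"
    proof -
      have "full (int k * (c div int k))"
      proof (cases "c div int k \<ge> 0")
        case True
        show ?thesis
        proof (cases "c div int k = 0")
          case True then show ?thesis using f0[OF fc] by simp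
        next
          case False
          then have "nat (c div int k) \<ge> 1" using \<open>c div int k \<ge> 0\<close> by linarith
          from mult[OF kprop[THEN conjunct2] this] show ?thesis using \<open>c div int k \<ge> 0\<close>
            by (simp add: algebra_simps)
        qed
      next
        case False
        then have "nat (- (c div int k)) \<ge> 1" by linarith
        from neg[OF mult[OF kprop[THEN conjunct2] this]] show ?thesis using False
          by (simp add: algebra_simps)
      qed
      from sub[OF fc this] show ?thesis by (simp add: r_def minus_mult_div_eq_mod)
    qed
    have "r = 0"
    proof (rule ccontr)
      assume "r \<noteq> 0"
      then have "nat r > 0" "nat r < k" "full (int (nat r))" using r0 fr by auto
      then show False using kmin by blast
    qed
    then show "int k dvd c" by (simp add: r_def dvd_eq_mod_eq_0)
  next
    assume "int k dvd c"
    then obtain m where m: "c = int k * m" by (auto simp: dvd_def)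
    show "full c"
    proof (cases "m \<ge> 1")
      case True
      from mult[OF kprop[THEN conjunct2], of "nat m"] True m show ?thesis by (simp add: algebra_simps)
    next
      case False
      show ?thesis
      proof (cases "m = 0")
        case True then show ?thesis using m f0[OF fy] by simp
      next
        case False
        then have "nat (- m) \<ge> 1" using \<open>\<not> m \<ge> 1\<close> by linarith
        from neg[OF mult[OF kprop[THEN conjunct2] this]] show ?thesis using m \<open>\<not> m \<ge> 1\<close>
          by (simp add: algebra_simps)
      qed
    qed
  qed
  define E where "E = {z \<in> A. \<not> full z}"
  have finE: "finite E"
  proof -
    have inj: "inj_on (\<lambda>z. z mod v) E"
    proof (rule inj_onI, rule ccontr)
      fix z1 z2 assume z: "z1 \<in> E" "z2 \<in> E" "z1 mod v = z2 mod v" "z1 \<noteq> z2"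
      then have d: "v dvd (z2 - z1)" by (metis mod_eq_dvd_iff)
      have "two z1"
      proof (cases "z1 < z2")
        case True then show ?thesis unfolding two_def using z d by (intro exI[of _ z1] exI[of _ z2]) (auto simp: E_def)
      next
        case False
        then have "z2 < z1" using z by simp
        moreover have "v dvd (z2 - z1)" using d .
        ultimately show ?thesis unfolding two_def using z by (intro exI[of _ z2] exI[of _ z1]) (auto simp: E_def)
      qed
      then show False using two_full z by (auto simp: E_def)
    qed
    have "(\<lambda>z. z mod v) ` E \<subseteq> {0..<v}" using v by auto
    then have "finite ((\<lambda>z. z mod v) ` E)" using finite_subset by blast
    then show ?thesis using inj finite_imageD by blast
  qed
  define Bf where "Bf r = (SOME B. \<forall>x. x > B \<longrightarrow> v dvd (x - r) \<longrightarrow> x \<in> A)" for r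
  have Bf: "x \<in> A" if "full r" "x > Bf r" "v dvd (x - r)" for r x
  proof -
    from that(1) have "\<exists>B. \<forall>x. x > B \<longrightarrow> v dvd (x - r) \<longrightarrow> x \<in> A" by (simp add: full_def)
    then have "\<forall>x. x > Bf r \<longrightarrow> v dvd (x - r) \<longrightarrow> x \<in> A" unfolding Bf_def by (rule someI_ex)
    then show ?thesis using that by blast
  qed
  define N where "N = max (Max (insert 0 E)) (Max (insert 0 (Bf ` {0..<v})))"
  have "x \<in> A \<longleftrightarrow> int k dvd x" if x: "x > N" for x
  proof
    assume xA: "x \<in> A"
    have "x \<notin> E"
    proof
      assume "x \<in> E"
      then have "x \<le> Max (insert 0 E)" using finE by simp
      then show False using x by (simp add: N_def)
    qed
    then show "int k dvd x" using xA fulliff by (simp add: E_def)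
  next
    assume "int k dvd x"
    then have fx: "full x" using fulliff by simp
    define r where "r = x mod v"
    have r: "r \<in> {0..<v}" using v by (simp add: r_def)
    have d: "v dvd (x - r)" by (simp add: r_def mod_eq_dvd_iff)
    have fr: "full r" by (rule cong[OF fx d])
    have "Bf r \<le> Max (insert 0 (Bf ` {0..<v}))" using r by (intro Max_ge) auto
    then have "x > Bf r" using x r by (simp add: N_def)
    then show "x \<in> A" using Bf[OF fr _ d] by simp
  qed
  then show ?thesis using kprop by (intro exI[of _ N] exI[of _ "int k"]) auto
qed

end

theorem mainTheorem1:
  fixes a :: "nat \<Rightarrow> int" and n :: nat
  assumes mono: "\<And>i j. 1 \<le> i \<Longrightarrow> i < j \<Longrightarrow> a i < a j"
    and pos: "\<And>i. 1 \<le> i \<Longrightarrow> a i > 0"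
    and npos: "n > 0"
    and cond1: "\<And>m. m > n \<Longrightarrow>
      \<exists>i r s j. 1 \<le> i \<and> i < r \<and> r \<le> s \<and> s < j \<and>
                 a m = a i + a j \<and> a m = a r + a s"
    and cond2: "\<And>i r s j. 1 \<le> i \<Longrightarrow> i < r \<Longrightarrow> r < s \<Longrightarrow> s < j \<Longrightarrow>
      a i + a j = a r + a s \<Longrightarrow> a i + a j > a n \<Longrightarrow>
      \<exists>m. m > n \<and> a m = a i + a j"
  shows "\<exists>(N::int) (k::int). k \<ge> 1 \<and>
           (\<forall>x. x > N \<longrightarrow> (x \<in> a ` {1..} \<longleftrightarrow> k dvd x))"
proof -
  have miff: "a i < a j \<longleftrightarrow> i < j" if "1 \<le> i" "1 \<le> j" for i j
  proof
    assume "a i < a j"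
    show "i < j"
    proof (rule ccontr)
      assume "\<not> i < j"
      then have "j < i \<or> j = i" by auto
      then show False using mono[OF that(2), of i] \<open>a i < a j\<close> by auto
    qed
  next
    assume "i < j" then show "a i < a j" using mono[OF that(1)] by simp
  qed
  have mle: "a i \<le> a j" if "1 \<le> i" "i \<le> j" for i j
    using mono[OF that(1), of j] that by (cases "i = j") auto
  have n1: "1 \<le> n" using npos by simp
  interpret S: setting "a ` {1..}" "a n"
  proof
    show "\<And>x. x \<in> a ` {1..} \<Longrightarrow> x > 0" using pos by auto
    show "a n > 0" using pos n1 by simp
  next
    fix u1 u2 u3 u4
    assume u: "u1 \<in> a ` {1..}" "u2 \<in> a ` {1..}" "u3 \<in> a ` {1..}" "u4 \<in> a ` {1..}"
      "u1 < u2" "u2 < u3" "u3 < u4" "u1 + u4 = u2 + u3" "u1 + u4 > a n"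
    from u(1-4) obtain i r s j where ij: "1 \<le> i" "1 \<le> r" "1 \<le> s" "1 \<le> j"
      "u1 = a i" "u2 = a r" "u3 = a s" "u4 = a j" by auto
    have o: "i < r" "r < s" "s < j" using miff ij u by auto
    from cond2[OF ij(1) o] u ij obtain m where "m > n" "a m = u1 + u4" by auto
    then show "u1 + u4 \<in> a ` {1..}" using n1 by (metis atLeast_iff image_eqI less_imp_le_nat order_trans)
  next
    fix x assume x: "x \<in> a ` {1..}" "x > a n"
    then obtain m where m: "1 \<le> m" "x = a m" by auto
    have "m > n" using miff[OF n1 m(1)] x m by simp
    from cond1[OF this] obtain i r s j where ij: "1 \<le> i" "i < r" "r \<le> s" "s < j"
      "a m = a i + a j" "a m = a r + a s" by blast
    have in1: "a i \<in> a ` {1..}" "a r \<in> a ` {1..}" "a s \<in> a ` {1..}" "a j \<in> a ` {1..}"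
      using ij by auto
    have "a i < a r" "a r \<le> a s" "a s < a j"
      using mono[OF ij(1) ij(2)] mle[of r s] mono[of s j] ij by auto
    then show "\<exists>u1 u2 u3 u4. u1 \<in> a ` {1..} \<and> u2 \<in> a ` {1..} \<and> u3 \<in> a ` {1..} \<and> u4 \<in> a ` {1..} \<and>
        u1 < u2 \<and> u2 \<le> u3 \<and> u3 < u4 \<and> x = u1 + u4 \<and> x = u2 + u3"
      using in1 ij m by blast
  next
    have inj: "inj_on a {1..}"
    proof (rule inj_onI)
      fix i j assume "i \<in> {1::nat..}" "j \<in> {1..}" "a i = a j"
      then show "i = j" using miff[of i j] miff[of j i] by (auto simp: linorder_neq_iff)
    qed
    have "infinite {1::nat..}" by (simp add: infinite_Ici)
    then show "infinite (a ` {1..})" using finite_imageD inj by blast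
  qed
  from S.exists_AP obtain v y where "v > 0" "\<forall>j::nat. y + int j * v \<in> a ` {1..}" by blast
  from S.AP_final[OF this(1)] this(2) show ?thesis by blast
qed

end
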